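(* Let $G=(V,E)$ be $(2,2)$-$C_i$-tight and let $v\in V$ have degree 3 with $N(v)\cap N(v')=\{x,x'\}$, so $N(v)=\{x,x',y\}$. Then, after possibly interchanging the names of $x$ and $x'$, one of the following holds: (1) $xy,x'y,xy',x'y'\in E$ and $G[\{v,v',x,x',y,y'\}]\cong F_1$; (2) $xy,x'y'\in E$, $xy',x'y\notin E$, and $G-\{v,v'\}+\{xy',x'y\}$ is $(2,2)$-$C_i$-tight; (3) $xy,x'y,xy',x'y'\notin E$, and either $G-\{v,v'\}+\{xy,x'y'\}$ or $G-\{v,v'\}+\{xy',x'y\}$ is $(2,2)$-$C_i$-tight.
   Context: A $\mathbb{Z}_2$-symmetric graph is a finite simple graph $G=(V,E)$ with an automorphism $\theta$, $\theta^2=\mathrm{id}$; write $v'=\theta(v)$. A vertex is fixed if $v'=v$; an edge $uv$ is fixed if $\{u',v'\}=\{u,v\}$. $G$ is $(2,2)$-sparse if every subgraph $(V',E')$ with $V'\ne\emptyset$ has $|E'|\le2|V'|-2$, $(2,2)$-tight if also $|E|=2|V|-2$. $G$ is $(2,2)$-$C_i$-tight if it is $(2,2)$-tight and $\theta$ fixes no vertex and no edge. $F_1$ is the graph on six vertices $a,b,c,d,e,f$ whose edges are all edges between $\{c,d\}$ and $\{a,b,e,f\}$ together with $ab$ and $ef$ (10 edges). $G-\{v,v'\}+\{st,s't'\}$ denotes deleting $v,v'$ and adding edges $st,s't'$ with the restricted involution. *)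

theory Defs
  imports Main
begin

definition simple_graph :: "'a set \<Rightarrow> 'a set set \<Rightarrow> bool" where
  "simple_graph V E \<longleftrightarrow> finite V \<and>
     (\<forall>e\<in>E. \<exists>u w. e = {u, w} \<and> u \<noteq> w \<and> u \<in> V \<and> w \<in> V)"

definition z2_symmetric :: "'a set \<Rightarrow> 'a set set \<Rightarrow> ('a \<Rightarrow> 'a) \<Rightarrow> bool" where
  "z2_symmetric V E \<theta> \<longleftrightarrow> simple_graph V E \<and>
     (\<forall>v\<in>V. \<theta> v \<in> V \<and> \<theta> (\<theta> v) = v) \<and>
     (\<forall>e\<in>E. \<theta> ` e \<in> E)"

definition sparse22 :: "'a set \<Rightarrow> 'a set set \<Rightarrow> bool" where
  "sparse22 V E \<longleftrightarrow> (\<forall>V' E'. V' \<noteq> {} \<and> V' \<subseteq> V \<and> E' \<subseteq> E \<and> (\<forall>e\<in>E'. e \<subseteq> V') \<longrightarrow>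
       int (card E') \<le> 2 * int (card V') - 2)"

definition tight22 :: "'a set \<Rightarrow> 'a set set \<Rightarrow> bool" where
  "tight22 V E \<longleftrightarrow> sparse22 V E \<and> int (card E) = 2 * int (card V) - 2"

definition fixed_vertex :: "('a \<Rightarrow> 'a) \<Rightarrow> 'a \<Rightarrow> bool" where
  "fixed_vertex \<theta> v \<longleftrightarrow> \<theta> v = v"

definition fixed_edge :: "('a \<Rightarrow> 'a) \<Rightarrow> 'a set \<Rightarrow> bool" where
  "fixed_edge \<theta> e \<longleftrightarrow> \<theta> ` e = e"

definition Ci_tight22 :: "'a set \<Rightarrow> 'a set set \<Rightarrow> ('a \<Rightarrow> 'a) \<Rightarrow> bool" where
  "Ci_tight22 V E \<theta> \<longleftrightarrow> z2_symmetric V E \<theta> \<and> tight22 V E \<and>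
     (\<forall>v\<in>V. \<not> fixed_vertex \<theta> v) \<and> (\<forall>e\<in>E. \<not> fixed_edge \<theta> e)"

definition nbhd :: "'a set \<Rightarrow> 'a set set \<Rightarrow> 'a \<Rightarrow> 'a set" where
  "nbhd V E v = {u \<in> V. {v, u} \<in> E}"

definition degree :: "'a set \<Rightarrow> 'a set set \<Rightarrow> 'a \<Rightarrow> nat" where
  "degree V E v = card (nbhd V E v)"

definition induced_edges :: "'a set set \<Rightarrow> 'a set \<Rightarrow> 'a set set" where
  "induced_edges E S = {e \<in> E. e \<subseteq> S}"

text \<open>F1 on vertices a,b,c,d,e,f = 0,1,2,3,4,5.\<close>
definition F1_verts :: "nat set" where "F1_verts = {0,1,2,3,4,5}"
definition F1_edges :: "nat set set" where
  "F1_edges = {{2,0},{2,1},{2,4},{2,5},{3,0},{3,1},{3,4},{3,5},{0,1},{4,5}}"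

definition graph_iso :: "'a set \<Rightarrow> 'a set set \<Rightarrow> 'b set \<Rightarrow> 'b set set \<Rightarrow> bool" where
  "graph_iso V E W F \<longleftrightarrow> (\<exists>f. bij_betw f V W \<and>
     (\<forall>e. e \<subseteq> V \<longrightarrow> (e \<in> E \<longleftrightarrow> f ` e \<in> F)))"

text \<open>G - {v,v'} + {st, s't'}: delete v and v', add edges {s,t} and {s',t'}; the involution is restricted.\<close>
definition reduce_V :: "'a set \<Rightarrow> ('a \<Rightarrow> 'a) \<Rightarrow> 'a \<Rightarrow> 'a set" where
  "reduce_V V \<theta> v = V - {v, \<theta> v}"
definition reduce_E :: "'a set set \<Rightarrow> ('a \<Rightarrow> 'a) \<Rightarrow> 'a \<Rightarrow> 'a \<Rightarrow> 'a \<Rightarrow> 'a set set" where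
  "reduce_E E \<theta> v s t = {e \<in> E. v \<notin> e \<and> \<theta> v \<notin> e} \<union> {{s, t}, {\<theta> s, \<theta> t}}"

end

theory Submission
  imports Defs
begin

lemma ind_sub:
  assumes "finite E"
  shows "card (induced_edges E A) + card (induced_edges E B)
     \<le> card (induced_edges E (A \<union> B)) + card (induced_edges E (A \<inter> B))"
proof -
  have f: "finite (induced_edges E S)" for S using assms by (simp add: induced_edges_def)
  have "card (induced_edges E A) + card (induced_edges E B)
      = card (induced_edges E A \<union> induced_edges E B) + card (induced_edges E A \<inter> induced_edges E B)"
    by (rule card_Un_Int[OF f f])
  also have "induced_edges E A \<inter> induced_edges E B = induced_edges E (A \<inter> B)"
    by (auto simp: induced_edges_def)
  also have "card (induced_edges E A \<union> induced_edges E B) \<le> card (induced_edges E (A \<union> B))"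
    by (rule card_mono[OF f]) (auto simp: induced_edges_def)
  finally show ?thesis by simp
qed

locale L5 =
  fixes V :: "'a set" and E :: "'a set set" and \<theta> :: "'a \<Rightarrow> 'a" and v x y :: 'a
  assumes G: "Ci_tight22 V E \<theta>"
    and vV: "v \<in> V"
    and deg: "degree V E v = 3"
    and common: "nbhd V E v \<inter> nbhd V E (\<theta> v) = {x, \<theta> x}"
    and Nv: "nbhd V E v = {x, \<theta> x, y}"
begin

abbreviation "ic S \<equiv> int (card (induced_edges E S))"
abbreviation "W0 \<equiv> V - {v, \<theta> v}"

lemma finV: "finite V" using G by (simp add: Ci_tight22_def z2_symmetric_def simple_graph_def)
lemma edge: "e \<in> E \<Longrightarrow> \<exists>u w. e = {u, w} \<and> u \<noteq> w \<and> u \<in> V \<and> w \<in> V"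
  using G by (simp add: Ci_tight22_def z2_symmetric_def simple_graph_def)
lemma EV: "E \<subseteq> Pow V"
proof
  fix e assume "e \<in> E"
  then obtain u w where "e = {u, w}" "u \<in> V" "w \<in> V" using edge by blast
  then show "e \<in> Pow V" by auto
qed
lemma finE: "finite E" by (rule finite_subset[OF EV]) (simp add: finV)
lemma thV: "u \<in> V \<Longrightarrow> \<theta> u \<in> V" using G by (simp add: Ci_tight22_def z2_symmetric_def)
lemma thth: "u \<in> V \<Longrightarrow> \<theta> (\<theta> u) = u" using G by (simp add: Ci_tight22_def z2_symmetric_def)
lemma thE: "e \<in> E \<Longrightarrow> \<theta> ` e \<in> E" using G by (simp add: Ci_tight22_def z2_symmetric_def)
lemma nofix: "u \<in> V \<Longrightarrow> \<theta> u \<noteq> u" using G by (simp add: Ci_tight22_def fixed_vertex_def)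
lemma nofixE: "e \<in> E \<Longrightarrow> \<theta> ` e \<noteq> e" using G by (simp add: Ci_tight22_def fixed_edge_def)
lemma cardE: "int (card E) = 2 * int (card V) - 2" using G by (simp add: Ci_tight22_def tight22_def)
lemma sparse: "S \<noteq> {} \<Longrightarrow> S \<subseteq> V \<Longrightarrow> ic S \<le> 2 * int (card S) - 2"
  using G unfolding Ci_tight22_def tight22_def sparse22_def
  by (metis (no_types, lifting) induced_edges_def mem_Collect_eq subsetI)

lemma thE2: "{p, q} \<in> E \<Longrightarrow> {\<theta> p, \<theta> q} \<in> E" using thE[of "{p,q}"] by simp
lemma noloop: "{p} \<notin> E"
proof
  assume "{p} \<in> E"
  then obtain u w where "{p} = {u, w}" "u \<noteq> w" using edge by blast
  then show False by blast
qed
lemma nbhd_iff: "u \<in> nbhd V E w \<longleftrightarrow> u \<in> V \<and> {w, u} \<in> E" by (simp add: nbhd_def)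

lemma inE_V: "{p, q} \<in> E \<Longrightarrow> p \<in> V \<and> q \<in> V" using EV by auto

lemma facts:
  "x \<in> V" "\<theta> x \<in> V" "y \<in> V" "\<theta> y \<in> V" "\<theta> v \<in> V"
  "{v, x} \<in> E" "{v, \<theta> x} \<in> E" "{v, y} \<in> E"
  "{\<theta> v, x} \<in> E" "{\<theta> v, \<theta> x} \<in> E" "{\<theta> v, \<theta> y} \<in> E"
  "{\<theta> v, y} \<notin> E" "{v, \<theta> y} \<notin> E" "{v, \<theta> v} \<notin> E"
  "v \<noteq> \<theta> v" "x \<noteq> \<theta> x" "y \<noteq> \<theta> y"
  "v \<noteq> x" "v \<noteq> \<theta> x" "v \<noteq> y" "v \<noteq> \<theta> y"
  "\<theta> v \<noteq> x" "\<theta> v \<noteq> \<theta> x" "\<theta> v \<noteq> y" "\<theta> v \<noteq> \<theta> y"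
  "x \<noteq> y" "x \<noteq> \<theta> y" "\<theta> x \<noteq> y" "\<theta> x \<noteq> \<theta> y"
proof -
  have xN: "x \<in> nbhd V E v" "\<theta> x \<in> nbhd V E v" "y \<in> nbhd V E v" using Nv by auto
  have xN': "x \<in> nbhd V E (\<theta> v)" "\<theta> x \<in> nbhd V E (\<theta> v)" using common by auto
  show xV: "x \<in> V" "\<theta> x \<in> V" "y \<in> V" "\<theta> y \<in> V" "\<theta> v \<in> V"
    using xN thV vV by (auto simp: nbhd_iff)
  show e1: "{v, x} \<in> E" "{v, \<theta> x} \<in> E" "{v, y} \<in> E"
    "{\<theta> v, x} \<in> E" "{\<theta> v, \<theta> x} \<in> E" using xN xN' by (auto simp: nbhd_iff)
  show "{\<theta> v, \<theta> y} \<in> E" using thE2[OF e1(3)] .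
  have c3: "card {x, \<theta> x, y} = 3" using deg Nv by (simp add: degree_def)
  then show dx: "x \<noteq> \<theta> x" "x \<noteq> y" "\<theta> x \<noteq> y"
    by (auto simp: card_insert_if split: if_splits)
  show yy: "y \<noteq> \<theta> y" using nofix[of y] xV(3) by auto
  show vv: "v \<noteq> \<theta> v" using nofix[of v] vV by auto
  show nvv: "{v, \<theta> v} \<notin> E" using nofixE[of "{v, \<theta> v}"] thth vV by (auto simp: insert_commute)
  show nvy: "{\<theta> v, y} \<notin> E"
  proof
    assume "{\<theta> v, y} \<in> E"
    then have "y \<in> nbhd V E v \<inter> nbhd V E (\<theta> v)" using xN xV by (auto simp: nbhd_iff)
    then show False using common dx by auto
  qed
  show "{v, \<theta> y} \<notin> E"
  proof
    assume "{v, \<theta> y} \<in> E"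
    then have "{\<theta> v, \<theta> (\<theta> y)} \<in> E" by (rule thE2)
    then show False using nvy thth xV by simp
  qed
  show "v \<noteq> x" "v \<noteq> \<theta> x" "v \<noteq> y" using e1(1-3) noloop[of v] by auto
  show tvx: "\<theta> v \<noteq> x" "\<theta> v \<noteq> \<theta> x" using e1(4,5) noloop[of "\<theta> v"] by auto
  show tvy: "\<theta> v \<noteq> y" using e1(3) nvv by auto
  show "v \<noteq> \<theta> y"
  proof
    assume "v = \<theta> y" then have "\<theta> v = y" using thth[of y] xV(3) by simp
    then show False using tvy by simp
  qed
  show "\<theta> v \<noteq> \<theta> y"
  proof
    assume "\<theta> v = \<theta> y" then have "\<theta> (\<theta> v) = \<theta> (\<theta> y)" by simp
    then show False using thth[of y] thth[of v] xV(3) vV \<open>v \<noteq> y\<close> by simp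
  qed
  show "x \<noteq> \<theta> y"
  proof
    assume "x = \<theta> y" then have "\<theta> x = y" using thth[of y] xV(3) by simp
    then show False using dx by simp
  qed
  show "\<theta> x \<noteq> \<theta> y"
  proof
    assume "\<theta> x = \<theta> y" then have "\<theta> (\<theta> x) = \<theta> (\<theta> y)" by simp
    then show False using thth[of y] thth[of x] xV dx by simp
  qed
qed

end

context L5 begin

lemma inj_th: "inj_on \<theta> V" by (metis inj_onI thth)

lemma union_tight:
  assumes A: "A \<subseteq> V" "ic A \<ge> 2 * int (card A) - 2"
    and B: "B \<subseteq> V" "ic B \<ge> 2 * int (card B) - 2"
    and AB: "A \<inter> B \<noteq> {}"
  shows "ic (A \<union> B) \<ge> 2 * int (card (A \<union> B)) - 2"
proof -
  have fA: "finite A" "finite B" using A B finV finite_subset by auto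
  have c: "card (A \<union> B) + card (A \<inter> B) = card A + card B" using card_Un_Int[OF fA] by simp
  have s: "ic (A \<inter> B) \<le> 2 * int (card (A \<inter> B)) - 2" using sparse[OF AB] A by auto
  have "ic A + ic B \<le> ic (A \<union> B) + ic (A \<inter> B)" using ind_sub[OF finE, of A B] by linarith
  then show ?thesis using A B c s by linarith
qed

lemma card_th: "X \<subseteq> V \<Longrightarrow> card (\<theta> ` X) = card X"
  using inj_th by (meson card_image inj_on_subset)

lemma ic_th: assumes "X \<subseteq> V" shows "ic (\<theta> ` X) \<ge> ic X"
proof -
  have "card (induced_edges E X) \<le> card (induced_edges E (\<theta> ` X))"
  proof (rule card_inj_on_le)
    show "inj_on ((`) \<theta>) (induced_edges E X)"
    proof (rule inj_onI)
      fix e f assume e: "e \<in> induced_edges E X" and f: "f \<in> induced_edges E X" and ef: "\<theta> ` e = \<theta> ` f"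
      have "e \<subseteq> V" "f \<subseteq> V" using e f assms by (auto simp: induced_edges_def)
      then show "e = f" using ef inj_th by (meson inj_on_image_eq_iff)
    qed
    show "(`) \<theta> ` induced_edges E X \<subseteq> induced_edges E (\<theta> ` X)"
      using thE by (auto simp: induced_edges_def)
    show "finite (induced_edges E (\<theta> ` X))" using finE by (simp add: induced_edges_def)
  qed
  then show ?thesis by simp
qed

lemma th_W0: assumes "X \<subseteq> W0" shows "\<theta> ` X \<subseteq> W0"
proof
  fix u assume "u \<in> \<theta> ` X"
  then obtain w where w: "w \<in> X" "u = \<theta> w" by auto
  have wV: "w \<in> V" "w \<noteq> v" "w \<noteq> \<theta> v" using w assms by auto
  have "u \<in> V" using w wV thV by auto
  moreover have "u \<noteq> v"
  proof
    assume "u = v" then have "\<theta> u = \<theta> v" by simp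
    then show False using thth[of w] wV w by simp
  qed
  moreover have "u \<noteq> \<theta> v" using wV thth[of v] thth[of w] vV w by metis
  ultimately show "u \<in> W0" by auto
qed

abbreviation "SIX \<equiv> {{v, x}, {v, \<theta> x}, {v, y}, {\<theta> v, x}, {\<theta> v, \<theta> x}, {\<theta> v, \<theta> y}}"

lemma card_SIX: "card SIX = 6"
  using facts by (simp add: doubleton_eq_iff)

lemma forbidden:
  assumes W: "W \<subseteq> W0" "x \<in> W" "\<theta> x \<in> W" "y \<in> W" "\<theta> y \<in> W"
    and i: "ic W \<ge> 2 * int (card W) - 3"
  shows False
proof -
  let ?S = "W \<union> {v, \<theta> v}"
  have fW: "finite W" using W finV finite_subset by blast
  have cS: "card ?S = card W + 2" using W facts fW by (auto simp: card_insert_if)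
  have sub: "induced_edges E W \<union> SIX \<subseteq> induced_edges E ?S"
    using W facts by (auto simp: induced_edges_def)
  have disj: "induced_edges E W \<inter> SIX = {}"
    using W by (auto simp: induced_edges_def)
  have fin: "finite (induced_edges E W)" using finE by (simp add: induced_edges_def)
  have "card (induced_edges E W \<union> SIX) = card (induced_edges E W) + 6"
    using card_Un_disjoint[OF fin _ disj] card_SIX by simp
  moreover have "card (induced_edges E W \<union> SIX) \<le> card (induced_edges E ?S)"
    by (rule card_mono[OF _ sub]) (simp add: finE induced_edges_def)
  moreover have "ic ?S \<le> 2 * int (card ?S) - 2" using sparse[of ?S] W vV facts by auto
  ultimately show False using i cS by linarith
qed

end

context L5 begin

abbreviation "base \<equiv> {e \<in> E. v \<notin> e \<and> \<theta> v \<notin> e}"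

lemma nb_thv: "{\<theta> v, z} \<in> E \<Longrightarrow> z \<in> {x, \<theta> x, \<theta> y}"
proof -
  assume a: "{\<theta> v, z} \<in> E"
  have zV: "z \<in> V" using inE_V[OF a] by simp
  have "{\<theta> (\<theta> v), \<theta> z} \<in> E" using thE2[OF a] .
  then have "{v, \<theta> z} \<in> E" using thth vV by simp
  then have "\<theta> z \<in> nbhd V E v" using thV zV by (simp add: nbhd_iff)
  then have "\<theta> z \<in> {x, \<theta> x, y}" using Nv by simp
  then have "\<theta> (\<theta> z) \<in> {\<theta> x, \<theta> (\<theta> x), \<theta> y}" by auto
  then show ?thesis using thth zV facts by auto
qed

lemma inc_SIX: "{e \<in> E. \<not> (v \<notin> e \<and> \<theta> v \<notin> e)} = SIX"
proof
  show "SIX \<subseteq> {e \<in> E. \<not> (v \<notin> e \<and> \<theta> v \<notin> e)}" using facts by auto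
  show "{e \<in> E. \<not> (v \<notin> e \<and> \<theta> v \<notin> e)} \<subseteq> SIX"
  proof
    fix e assume e: "e \<in> {e \<in> E. \<not> (v \<notin> e \<and> \<theta> v \<notin> e)}"
    then have eE: "e \<in> E" by simp
    obtain u w where uw: "e = {u, w}" "u \<noteq> w" using edge[OF eE] by blast
    show "e \<in> SIX"
    proof (cases "v \<in> e")
      case True
      then have "e = {v, w} \<or> e = {v, u}" using uw by (auto simp: insert_commute)
      then obtain z where z: "e = {v, z}" by blast
      then have "z \<in> nbhd V E v" using eE inE_V by (simp add: nbhd_iff)
      then have "z \<in> {x, \<theta> x, y}" using Nv by simp
      then show ?thesis using z by auto
    next
      case False
      then have "\<theta> v \<in> e" using e by simp
      then have "e = {\<theta> v, w} \<or> e = {\<theta> v, u}" using uw by (auto simp: insert_commute)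
      then obtain z where z: "e = {\<theta> v, z}" by blast
      then have "z \<in> {x, \<theta> x, \<theta> y}" using nb_thv eE by simp
      then show ?thesis using z by auto
    qed
  qed
qed

lemma card_base: "int (card base) = int (card E) - 6"
proof -
  have "E = base \<union> {e \<in> E. \<not> (v \<notin> e \<and> \<theta> v \<notin> e)}" by auto
  then have "E = base \<union> SIX" using inc_SIX by simp
  moreover have "base \<inter> SIX = {}" by auto
  moreover have "finite base" using finE by simp
  moreover have "card (base \<union> SIX) = card base + card SIX"
    by (rule card_Un_disjoint) (use finE in auto)
  ultimately have "card E = card base + card SIX" by simp
  then show ?thesis using card_SIX by simp
qed

lemma reduce_ok:
  assumes s: "s \<in> {x, \<theta> x}" and t: "t \<in> {y, \<theta> y}" and nst: "{s, t} \<notin> E"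
    and NB: "\<And>X. X \<subseteq> W0 \<Longrightarrow> s \<in> X \<Longrightarrow> t \<in> X \<Longrightarrow> ic X < 2 * int (card X) - 2"
  shows "Ci_tight22 (reduce_V V \<theta> v) (reduce_E E \<theta> v s t) \<theta>"
proof -
  have sV: "s \<in> V" "\<theta> s \<in> V" "t \<in> V" "\<theta> t \<in> V" using s t facts thth by auto
  have sW: "s \<in> W0" "\<theta> s \<in> W0" "t \<in> W0" "\<theta> t \<in> W0" using s t facts thth by auto
  have tts: "\<theta> (\<theta> s) = s" "\<theta> (\<theta> t) = t" using sV thth by auto
  have neq: "s \<noteq> t" "\<theta> s \<noteq> \<theta> t" "s \<noteq> \<theta> s" "t \<noteq> \<theta> t" "s \<noteq> \<theta> t" "\<theta> s \<noteq> t"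
    using s t facts thth by auto
  have nst2: "{\<theta> s, \<theta> t} \<notin> E"
  proof
    assume "{\<theta> s, \<theta> t} \<in> E" then have "{\<theta> (\<theta> s), \<theta> (\<theta> t)} \<in> E" by (rule thE2)
    then show False using nst tts by simp
  qed
  let ?V = "reduce_V V \<theta> v" and ?E = "reduce_E E \<theta> v s t"
  have Vr: "?V = W0" by (simp add: reduce_V_def)
  have Er: "?E = base \<union> {{s, t}, {\<theta> s, \<theta> t}}" by (simp add: reduce_E_def)
  have finV': "finite ?V" using finV Vr by simp
  have sg: "simple_graph ?V ?E"
    unfolding simple_graph_def
  proof (intro conjI ballI)
    show "finite ?V" by fact
    fix e assume "e \<in> ?E"
    then consider "e \<in> base" | "e = {s, t}" | "e = {\<theta> s, \<theta> t}" using Er by auto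
    then show "\<exists>u w. e = {u, w} \<and> u \<noteq> w \<and> u \<in> ?V \<and> w \<in> ?V"
    proof cases
      case 1
      then obtain u w where "e = {u, w}" "u \<noteq> w" "u \<in> V" "w \<in> V" using edge by blast
      then show ?thesis using 1 Vr by auto
    next
      case 2 then show ?thesis using neq sW Vr by auto
    next
      case 3 then show ?thesis using neq sW Vr by auto
    qed
  qed
  have thW: "\<theta> u \<in> W0" if "u \<in> W0" for u using th_W0[of "{u}"] that by auto
  have z2: "z2_symmetric ?V ?E \<theta>"
    unfolding z2_symmetric_def
  proof (intro conjI ballI)
    show "simple_graph ?V ?E" by fact
    fix u assume "u \<in> ?V"
    then show "\<theta> u \<in> ?V" "\<theta> (\<theta> u) = u" using thW thth Vr by auto
  next
    fix e assume "e \<in> ?E"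
    then consider "e \<in> base" | "e = {s, t}" | "e = {\<theta> s, \<theta> t}" using Er by auto
    then show "\<theta> ` e \<in> ?E"
    proof cases
      case 1
      then have eE: "e \<in> E" and eW: "e \<subseteq> W0" using EV by auto
      have "\<theta> ` e \<subseteq> W0" using th_W0[OF eW] .
      then show ?thesis using thE[OF eE] Er by auto
    next
      case 2 then show ?thesis using Er by auto
    next
      case 3 then show ?thesis using Er tts by auto
    qed
  qed
  have c2: "2 \<le> card V"
  proof -
    have "card {v, \<theta> v} \<le> card V" by (rule card_mono[OF finV]) (use vV facts in auto)
    then show ?thesis using facts by simp
  qed
  have cV: "int (card ?V) = int (card V) - 2"
    using Vr finV vV facts c2 by (simp add: card_Diff_subset of_nat_diff)
  have cE: "int (card ?E) = int (card base) + 2"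
  proof -
    have "base \<inter> {{s, t}, {\<theta> s, \<theta> t}} = {}" using nst nst2 by auto
    moreover have "card {{s, t}, {\<theta> s, \<theta> t}} = 2" using neq by (auto simp: doubleton_eq_iff)
    moreover have "finite base" using finE by simp
    ultimately have "card (base \<union> {{s, t}, {\<theta> s, \<theta> t}}) = card base + 2"
      by (subst card_Un_disjoint) auto
    then show ?thesis using Er by simp
  qed
  have count: "int (card ?E) = 2 * int (card ?V) - 2" using cE cV card_base cardE by linarith
  have sp: "sparse22 ?V ?E"
    unfolding sparse22_def
  proof (intro allI impI, elim conjE)
    fix V' E' assume V'ne: "V' \<noteq> {}" and V'V: "V' \<subseteq> ?V" and E'E: "E' \<subseteq> ?E"
      and E'in: "\<forall>e\<in>E'. e \<subseteq> V'"
    have V'W: "V' \<subseteq> W0" using V'V Vr by simp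
    have V'V0: "V' \<subseteq> V" using V'W by auto
    let ?N = "{{s, t}, {\<theta> s, \<theta> t}} \<inter> {e. e \<subseteq> V'}"
    have "E' \<subseteq> induced_edges E V' \<union> ?N" using E'E E'in Er by (auto simp: induced_edges_def)
    moreover have "finite (induced_edges E V' \<union> ?N)" using finE by (simp add: induced_edges_def)
    ultimately have "card E' \<le> card (induced_edges E V' \<union> ?N)" by (rule card_mono[rotated])
    also have "\<dots> \<le> card (induced_edges E V') + card ?N" by (rule card_Un_le)
    finally have cE': "int (card E') \<le> ic V' + int (card ?N)" by simp
    have spV': "ic V' \<le> 2 * int (card V') - 2" using sparse[OF V'ne V'V0] .
    show "int (card E') \<le> 2 * int (card V') - 2"
    proof (cases "{s, t} \<subseteq> V'")
      case st: True
      show ?thesis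
      proof (cases "{\<theta> s, \<theta> t} \<subseteq> V'")
        case True
        have xx: "x \<in> V'" "\<theta> x \<in> V'" "y \<in> V'" "\<theta> y \<in> V'" using s t st True thth[of x] thth[of y] facts(1,3) by auto
        have "\<not> ic V' \<ge> 2 * int (card V') - 3"
        proof
          assume "ic V' \<ge> 2 * int (card V') - 3"
          then show False by (rule forbidden[OF V'W xx])
        qed
        then have "ic V' < 2 * int (card V') - 3" by simp
        moreover have "card ?N \<le> 2"
        proof -
          have "card ?N \<le> card {{s, t}, {\<theta> s, \<theta> t}}" by (rule card_mono) auto
          also have "\<dots> \<le> 2" by (simp add: card_insert_if)
          finally show ?thesis .
        qed
        ultimately show ?thesis using cE' by linarith
      next
        case False
        then have "?N \<subseteq> {{s, t}}" by auto
        then have "card ?N \<le> card {{s, t}}" by (intro card_mono) auto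
        then have "card ?N \<le> 1" by simp
        moreover have "ic V' < 2 * int (card V') - 2" using NB[OF V'W] st by simp
        ultimately show ?thesis using cE' by linarith
      qed
    next
      case nst': False
      show ?thesis
      proof (cases "{\<theta> s, \<theta> t} \<subseteq> V'")
        case True
        then have "?N \<subseteq> {{\<theta> s, \<theta> t}}" using nst' by auto
        then have "card ?N \<le> card {{\<theta> s, \<theta> t}}" by (intro card_mono) auto
        then have "card ?N \<le> 1" by simp
        moreover have "ic (\<theta> ` V') < 2 * int (card (\<theta> ` V')) - 2"
        proof -
          have "s \<in> \<theta> ` V'" "t \<in> \<theta> ` V'" using True tts by (auto intro: image_eqI[where x = "\<theta> s"] image_eqI[where x = "\<theta> t"])
          then show ?thesis using NB[OF th_W0[OF V'W]] by simp
        qed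
        moreover have "ic V' \<le> ic (\<theta> ` V')" using ic_th[OF V'V0] .
        moreover have "card (\<theta> ` V') = card V'" using card_th[OF V'V0] .
        ultimately show ?thesis using cE' by linarith
      next
        case False
        then have "?N = {}" using nst' by auto
        then show ?thesis using cE' spV' by simp
      qed
    qed
  qed
  have nfv: "\<forall>u\<in>?V. \<not> fixed_vertex \<theta> u" using nofix Vr by (auto simp: fixed_vertex_def)
  have nfe: "\<forall>e\<in>?E. \<not> fixed_edge \<theta> e"
  proof
    fix e assume "e \<in> ?E"
    then consider "e \<in> base" | "e = {s, t}" | "e = {\<theta> s, \<theta> t}" using Er by auto
    then show "\<not> fixed_edge \<theta> e"
    proof cases
      case 1 then show ?thesis using nofixE by (auto simp: fixed_edge_def)
    next
      case 2 then show ?thesis using neq by (auto simp: fixed_edge_def doubleton_eq_iff)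
    next
      case 3 then show ?thesis using neq tts by (auto simp: fixed_edge_def doubleton_eq_iff)
    qed
  qed
  show ?thesis unfolding Ci_tight22_def tight22_def using z2 sp count nfv nfe by simp
qed

end

context L5 begin

lemma case2:
  assumes a: "a \<in> {x, \<theta> x}" and e1: "{a, y} \<in> E" and e2: "{\<theta> a, \<theta> y} \<in> E"
    and n: "{a, \<theta> y} \<notin> E"
  shows "Ci_tight22 (reduce_V V \<theta> v) (reduce_E E \<theta> v a (\<theta> y)) \<theta>"
proof (rule reduce_ok[OF a _ n])
  show "\<theta> y \<in> {y, \<theta> y}" by simp
  fix X assume XW: "X \<subseteq> W0" and aX: "a \<in> X" and tyX: "\<theta> y \<in> X"
  show "ic X < 2 * int (card X) - 2"
  proof (rule ccontr)
    assume "\<not> ?thesis"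
    then have tX: "ic X \<ge> 2 * int (card X) - 2" by simp
    let ?Y = "\<theta> ` X"
    have XV: "X \<subseteq> V" using XW by auto
    have YW: "?Y \<subseteq> W0" using th_W0[OF XW] .
    have YV: "?Y \<subseteq> V" using YW by auto
    have tY: "ic ?Y \<ge> 2 * int (card ?Y) - 2" using tX ic_th[OF XV] card_th[OF XV] by simp
    have aY: "\<theta> a \<in> ?Y" using aX by simp
    have yY: "y \<in> ?Y" using tyX thth[of y] facts(3) by (metis image_eqI)
    have aa: "{a, \<theta> a} = {x, \<theta> x}" using a thth[of x] facts(1) by auto
    have all: "x \<in> X \<union> ?Y" "\<theta> x \<in> X \<union> ?Y" "y \<in> X \<union> ?Y" "\<theta> y \<in> X \<union> ?Y"
    proof -
      have xa: "x \<in> {a, \<theta> a}" "\<theta> x \<in> {a, \<theta> a}" using aa by auto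
      show "x \<in> X \<union> ?Y" "\<theta> x \<in> X \<union> ?Y" "y \<in> X \<union> ?Y" "\<theta> y \<in> X \<union> ?Y"
        using aX aY yY tyX xa by auto
    qed
    have UW: "X \<union> ?Y \<subseteq> W0" using XW YW by simp
    show False
    proof (cases "X \<inter> ?Y = {}")
      case False
      have "ic (X \<union> ?Y) \<ge> 2 * int (card (X \<union> ?Y)) - 2"
        by (rule union_tight[OF XV tX YV tY False])
      then show False using forbidden[OF UW all] by linarith
    next
      case True
      let ?P = "{{a, y}, {\<theta> a, \<theta> y}}"
      have fin: "finite (induced_edges E S)" for S using finE by (simp add: induced_edges_def)
      have finX: "finite X" using XV finV finite_subset by blast
      have ney: "a \<noteq> \<theta> a" "a \<noteq> \<theta> y" using a facts thth[of x] facts(1) by auto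
      have cP: "card ?P = 2" using ney by (auto simp: doubleton_eq_iff)
      have d1: "induced_edges E X \<inter> induced_edges E ?Y = {}"
      proof (rule ccontr)
        assume "induced_edges E X \<inter> induced_edges E ?Y \<noteq> {}"
        then obtain e where e: "e \<in> E" "e \<subseteq> X" "e \<subseteq> ?Y" by (auto simp: induced_edges_def)
        then have "e = {}" using True by blast
        moreover obtain p q where "e = {p, q}" using edge[OF e(1)] by blast
        ultimately show False by simp
      qed
      have d2: "(induced_edges E X \<union> induced_edges E ?Y) \<inter> ?P = {}"
        using True aX yY aY tyX by (auto simp: induced_edges_def)
      have "card (induced_edges E X \<union> induced_edges E ?Y \<union> ?P)
          = card (induced_edges E X) + card (induced_edges E ?Y) + 2"
        using card_Un_disjoint[OF fin fin d1] card_Un_disjoint[OF _ _ d2] fin cP by simp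
      moreover have "card (induced_edges E X \<union> induced_edges E ?Y \<union> ?P) \<le> card (induced_edges E (X \<union> ?Y))"
        by (rule card_mono[OF fin]) (use e1 e2 aX yY aY tyX in \<open>auto simp: induced_edges_def\<close>)
      moreover have "card (X \<union> ?Y) = card X + card ?Y"
        using card_Un_disjoint[OF finX _ True] finX by simp
      ultimately have "ic (X \<union> ?Y) \<ge> 2 * int (card (X \<union> ?Y)) - 2"
        using tX tY card_th[OF XV] by linarith
      then show False using forbidden[OF UW all] by linarith
    qed
  qed
qed

end

context L5 begin

lemma blocker:
  assumes s: "s \<in> {x, \<theta> x}" and t: "t \<in> {y, \<theta> y}" and nst: "{s, t} \<notin> E"
    and nc: "\<not> Ci_tight22 (reduce_V V \<theta> v) (reduce_E E \<theta> v s t) \<theta>"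
  obtains X where "X \<subseteq> W0" "s \<in> X" "t \<in> X" "ic X \<ge> 2 * int (card X) - 2"
proof -
  have "\<exists>X. X \<subseteq> W0 \<and> s \<in> X \<and> t \<in> X \<and> ic X \<ge> 2 * int (card X) - 2"
  proof (rule ccontr)
    assume h: "\<not> ?thesis"
    have "Ci_tight22 (reduce_V V \<theta> v) (reduce_E E \<theta> v s t) \<theta>"
    proof (rule reduce_ok[OF s t nst])
      fix X assume "X \<subseteq> W0" "s \<in> X" "t \<in> X"
      then show "ic X < 2 * int (card X) - 2" using h by force
    qed
    then show False using nc by simp
  qed
  then show ?thesis using that by blast
qed

lemma case3:
  assumes n1: "{x, y} \<notin> E" and n2: "{x, \<theta> y} \<notin> E"
  shows "Ci_tight22 (reduce_V V \<theta> v) (reduce_E E \<theta> v x y) \<theta> \<or>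
         Ci_tight22 (reduce_V V \<theta> v) (reduce_E E \<theta> v x (\<theta> y)) \<theta>"
proof (rule ccontr)
  assume "\<not> ?thesis"
  then have c1: "\<not> Ci_tight22 (reduce_V V \<theta> v) (reduce_E E \<theta> v x y) \<theta>"
    and c2: "\<not> Ci_tight22 (reduce_V V \<theta> v) (reduce_E E \<theta> v x (\<theta> y)) \<theta>" by auto
  obtain X where X: "X \<subseteq> W0" "x \<in> X" "y \<in> X" "ic X \<ge> 2 * int (card X) - 2"
    using blocker[of x y] n1 c1 by auto
  obtain Y where Y: "Y \<subseteq> W0" "x \<in> Y" "\<theta> y \<in> Y" "ic Y \<ge> 2 * int (card Y) - 2"
    using blocker[of x "\<theta> y"] n2 c2 by auto
  let ?Z = "X \<union> Y"
  have ZW: "?Z \<subseteq> W0" using X Y by auto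
  have ZV: "?Z \<subseteq> V" using ZW by auto
  have tZ: "ic ?Z \<ge> 2 * int (card ?Z) - 2"
    by (rule union_tight) (use X Y in auto)
  let ?Z' = "\<theta> ` ?Z"
  have Z'W: "?Z' \<subseteq> W0" using th_W0[OF ZW] .
  have tZ': "ic ?Z' \<ge> 2 * int (card ?Z') - 2" using tZ ic_th[OF ZV] card_th[OF ZV] by simp
  have yZ': "y \<in> ?Z'" using Y(3) thth[of y] facts(3) by (metis UnI2 image_eqI)
  have txZ': "\<theta> x \<in> ?Z'" using X(2) by simp
  have U: "ic (?Z \<union> ?Z') \<ge> 2 * int (card (?Z \<union> ?Z')) - 2"
    by (rule union_tight) (use ZW Z'W tZ tZ' yZ' X(3) in auto)
  have UW: "?Z \<union> ?Z' \<subseteq> W0" using ZW Z'W by simp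
  have "x \<in> ?Z \<union> ?Z'" "\<theta> x \<in> ?Z \<union> ?Z'" "y \<in> ?Z \<union> ?Z'" "\<theta> y \<in> ?Z \<union> ?Z'"
    using X Y txZ' by auto
  from forbidden[OF UW this] U show False by linarith
qed

end

context L5 begin

lemma fixed_non: "{x, \<theta> x} \<notin> E" "{y, \<theta> y} \<notin> E"
proof -
  have "\<theta> ` {x, \<theta> x} = {x, \<theta> x}" using thth[of x] facts(1) by auto
  then show "{x, \<theta> x} \<notin> E" using nofixE by blast
  have "\<theta> ` {y, \<theta> y} = {y, \<theta> y}" using thth[of y] facts(3) by auto
  then show "{y, \<theta> y} \<notin> E" using nofixE by blast
qed

abbreviation "S6 \<equiv> {v, \<theta> v, x, \<theta> x, y, \<theta> y}"
abbreviation "TEN \<equiv> {{x, v}, {x, y}, {x, \<theta> v}, {x, \<theta> y}, {\<theta> x, v}, {\<theta> x, y}, {\<theta> x, \<theta> v},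
   {\<theta> x, \<theta> y}, {v, y}, {\<theta> v, \<theta> y}}"

definition fmap :: "'a \<Rightarrow> nat" where
  "fmap u = (if u = v then 0 else if u = y then 1 else if u = x then 2 else if u = \<theta> x then 3
     else if u = \<theta> v then 4 else 5)"

lemma fvals: "fmap v = 0" "fmap y = 1" "fmap x = 2" "fmap (\<theta> x) = 3" "fmap (\<theta> v) = 4" "fmap (\<theta> y) = 5"
  using facts unfolding fmap_def by auto

lemma fmap_inj: "inj_on fmap S6"
  unfolding inj_on_def
  apply (intro ballI impI)
  apply (elim insertE emptyE)
  apply (simp_all add: fvals)
  done

lemma img: "(\<lambda>e. fmap ` e) ` TEN = F1_edges"
  unfolding F1_edges_def by (simp add: fvals)

lemma TENE: assumes "e \<subseteq> S6"
  and e: "{x, y} \<in> E" "{\<theta> x, y} \<in> E" "{x, \<theta> y} \<in> E" "{\<theta> x, \<theta> y} \<in> E" shows "e \<in> E \<longleftrightarrow> e \<in> TEN"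
proof
  assume eE: "e \<in> E"
  obtain p q where pq: "e = {p, q}" "p \<noteq> q" using edge[OF eE] by blast
  have p: "p \<in> S6" and q: "q \<in> S6" using pq assms by auto
  from p q pq eE facts(12-14) fixed_non show "e \<in> TEN"
    by (elim insertE emptyE; simp add: insert_commute)
next
  assume "e \<in> TEN" 
  then show "e \<in> E" using facts(6-11) e
    by (elim insertE emptyE; simp add: insert_commute)
qed

lemma case1:
  assumes e: "{x, y} \<in> E" "{\<theta> x, y} \<in> E" "{x, \<theta> y} \<in> E" "{\<theta> x, \<theta> y} \<in> E"
  shows "graph_iso S6 (induced_edges E S6) F1_verts F1_edges"
  unfolding graph_iso_def
proof (intro exI conjI allI impI)
  have i1: "fmap ` S6 = {0, 4, 2, 3, 1, 5}" by (simp add: fvals)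
  have i2: "{0, 4, 2, 3, 1, 5::nat} = {0, 1, 2, 3, 4, 5}" by auto
  show "bij_betw fmap S6 F1_verts" unfolding bij_betw_def F1_verts_def
    using fmap_inj i1 i2 by simp
  fix e :: "'a set" assume eS: "e \<subseteq> S6"
  have "e \<in> induced_edges E S6 \<longleftrightarrow> e \<in> TEN" using TENE[OF eS e] eS by (simp add: induced_edges_def)
  also have "\<dots> \<longleftrightarrow> fmap ` e \<in> (\<lambda>e. fmap ` e) ` TEN"
  proof
    assume "e \<in> TEN" then show "fmap ` e \<in> (\<lambda>e. fmap ` e) ` TEN" by (rule imageI)
  next
    assume "fmap ` e \<in> (\<lambda>e. fmap ` e) ` TEN"
    then obtain e' where e': "e' \<in> TEN" "fmap ` e = fmap ` e'" by (rule imageE) simp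
    have "e' \<subseteq> S6" using e' by auto
    then have "e = e'" using e'(2) eS fmap_inj by (simp add: inj_on_image_eq_iff)
    then show "e \<in> TEN" using e' by simp
  qed
  finally have "e \<in> induced_edges E S6 \<longleftrightarrow> fmap ` e \<in> (\<lambda>e. fmap ` e) ` TEN" .
  then show "e \<in> induced_edges E S6 \<longleftrightarrow> fmap ` e \<in> F1_edges" by (simp only: img)
qed

end

theorem lemma5p5:
  fixes V :: "'a set" and E :: "'a set set" and \<theta> :: "'a \<Rightarrow> 'a" and v x y :: 'a
  assumes G: "Ci_tight22 V E \<theta>"
    and vV: "v \<in> V"
    and deg: "degree V E v = 3"
    and common: "nbhd V E v \<inter> nbhd V E (\<theta> v) = {x, \<theta> x}"
    and Nv: "nbhd V E v = {x, \<theta> x, y}"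
  shows "\<exists>a \<in> {x, \<theta> x}. \<theta> a \<in> {x, \<theta> x} \<and> {a, \<theta> a} = {x, \<theta> x} \<and>
    ( ({a, y} \<in> E \<and> {\<theta> a, y} \<in> E \<and> {a, \<theta> y} \<in> E \<and> {\<theta> a, \<theta> y} \<in> E \<and>
        graph_iso {v, \<theta> v, a, \<theta> a, y, \<theta> y}
                  (induced_edges E {v, \<theta> v, a, \<theta> a, y, \<theta> y}) F1_verts F1_edges)
    \<or> ({a, y} \<in> E \<and> {\<theta> a, \<theta> y} \<in> E \<and> {a, \<theta> y} \<notin> E \<and> {\<theta> a, y} \<notin> E \<and>
        Ci_tight22 (reduce_V V \<theta> v) (reduce_E E \<theta> v a (\<theta> y)) \<theta>)
    \<or> ({a, y} \<notin> E \<and> {\<theta> a, y} \<notin> E \<and> {a, \<theta> y} \<notin> E \<and> {\<theta> a, \<theta> y} \<notin> E \<and>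
        (Ci_tight22 (reduce_V V \<theta> v) (reduce_E E \<theta> v a y) \<theta> \<or>
         Ci_tight22 (reduce_V V \<theta> v) (reduce_E E \<theta> v a (\<theta> y)) \<theta>)))"
proof -
  interpret L5 V E \<theta> v x y using assms by unfold_locales
  have tx: "\<theta> (\<theta> x) = x" and ty: "\<theta> (\<theta> y) = y" using thth facts(1,3) by auto
  have sym1: "{x, y} \<in> E \<longleftrightarrow> {\<theta> x, \<theta> y} \<in> E"
    using thE2[of x y] thE2[of "\<theta> x" "\<theta> y"] tx ty by auto
  have sym2: "{\<theta> x, y} \<in> E \<longleftrightarrow> {x, \<theta> y} \<in> E"
    using thE2[of "\<theta> x" y] thE2[of x "\<theta> y"] tx ty by auto
  have wx: "x \<in> {x, \<theta> x}" "\<theta> x \<in> {x, \<theta> x}" "{x, \<theta> x} = {x, \<theta> x}" by auto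
  have wtx: "\<theta> x \<in> {x, \<theta> x}" "\<theta> (\<theta> x) \<in> {x, \<theta> x}" "{\<theta> x, \<theta> (\<theta> x)} = {x, \<theta> x}"
    using tx by auto
  show ?thesis
  proof (cases "{x, y} \<in> E")
    case A: True
    show ?thesis
    proof (cases "{\<theta> x, y} \<in> E")
      case True
      have "{x, \<theta> y} \<in> E" "{\<theta> x, \<theta> y} \<in> E" using A True sym1 sym2 by auto
      then have "graph_iso {v, \<theta> v, x, \<theta> x, y, \<theta> y}
                  (induced_edges E {v, \<theta> v, x, \<theta> x, y, \<theta> y}) F1_verts F1_edges"
        using case1 A True by blast
      then show ?thesis using wx A True \<open>{x, \<theta> y} \<in> E\<close> \<open>{\<theta> x, \<theta> y} \<in> E\<close> by blast
    next
      case False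
      have e2: "{\<theta> x, \<theta> y} \<in> E" "{x, \<theta> y} \<notin> E" using A False sym1 sym2 by auto
      have "Ci_tight22 (reduce_V V \<theta> v) (reduce_E E \<theta> v x (\<theta> y)) \<theta>"
        by (rule case2[OF wx(1) A e2])
      then show ?thesis using wx A False e2 by blast
    qed
  next
    case A: False
    show ?thesis
    proof (cases "{\<theta> x, y} \<in> E")
      case True
      have e2: "{\<theta> (\<theta> x), \<theta> y} \<in> E" "{\<theta> x, \<theta> y} \<notin> E" "{\<theta> (\<theta> x), y} \<notin> E"
        using A True sym1 sym2 tx by auto
      have "Ci_tight22 (reduce_V V \<theta> v) (reduce_E E \<theta> v (\<theta> x) (\<theta> y)) \<theta>"
        by (rule case2[OF wtx(1) True e2(1,2)])
      then show ?thesis using wtx True e2 by blast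
    next
      case False
      have e2: "{x, \<theta> y} \<notin> E" "{\<theta> x, \<theta> y} \<notin> E" using A False sym1 sym2 by auto
      have "Ci_tight22 (reduce_V V \<theta> v) (reduce_E E \<theta> v x y) \<theta> \<or>
         Ci_tight22 (reduce_V V \<theta> v) (reduce_E E \<theta> v x (\<theta> y)) \<theta>"
        by (rule case3[OF A e2(1)])
      then show ?thesis using wx A False e2 by blast
    qed
  qed
qed


end
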